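(* For any integer $n>1$ and any integer $1\le m\le n(n-1)$, the numbers $\lceil \frac{m}{n-1}\rceil$ and $n-((m-1)\bmod n)$ are two distinct integers in $\{1,\dots,n\}$.
   Context: $a\bmod b$ denotes the remainder of $a$ upon division by $b$, lying in $\{0,\dots,b-1\}$. *)

theory Defs
  imports Complex_Main
begin

end

theory Submission
  imports Defs
begin

theorem lemma8:
  fixes n m :: int
  assumes "n > 1" and "1 \<le> m" and "m \<le> n * (n - 1)"
  shows "\<lceil>real_of_int m / real_of_int (n - 1)\<rceil> \<in> {1..n}
       \<and> n - ((m - 1) mod n) \<in> {1..n}
       \<and> \<lceil>real_of_int m / real_of_int (n - 1)\<rceil> \<noteq> n - ((m - 1) mod n)"
proof -
  define d where "d = n - 1"
  have d0: "d > 0" using assms d_def by simp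
  define q where "q = (m - 1) div d"
  define r where "r = (m - 1) mod d"
  have mq: "m - 1 = q * d + r" using q_def r_def by simp
  have r0: "0 \<le> r" "r < d" using d0 r_def by auto
  have q0: "0 \<le> q" using q_def assms d0 by (simp add: div_int_pos_iff)
  have qn: "q < n"
  proof (rule ccontr)
    assume "\<not> q < n" then have "q * d \<ge> n * d" using d0 by (simp add: mult_right_mono)
    then show False using mq r0 assms d_def by (simp add: algebra_simps)
  qed
  have c: "\<lceil>real_of_int m / real_of_int (n - 1)\<rceil> = q + 1"
  proof -
    have "\<lceil>real_of_int m / real_of_int d\<rceil> = q + 1"
    proof (rule ceiling_unique)
      have "real_of_int m = real_of_int q * real_of_int d + real_of_int r + 1"
        using mq by (metis add.commute diff_add_cancel of_int_add of_int_mult of_int_1)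
      moreover have "real_of_int d > 0" using d0 by simp
      moreover have "real_of_int r + 1 \<le> real_of_int d" using r0 by linarith
      moreover have "real_of_int r \<ge> 0" using r0 by simp
      ultimately show "real_of_int (q + 1) - 1 < real_of_int m / real_of_int d"
        and "real_of_int m / real_of_int d \<le> real_of_int (q + 1)"
        by (simp_all add: field_simps)
    qed
    then show ?thesis using d_def by simp
  qed
  have m1: "m - 1 = q * n + (r - q)" using mq d_def by (simp add: algebra_simps)
  show ?thesis
  proof (cases "r \<ge> q")
    case True
    have "(m - 1) mod n = r - q"
      proof -
      have "(m - 1) mod n = (r - q) mod n" using m1 by simp
      also have "... = r - q" using True r0 q0 d_def by (intro mod_pos_pos_trivial) auto
      finally show ?thesis .
    qed
    then show ?thesis using c True r0 qn q0 d_def by auto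
  next
    case False
    have "m - 1 = (q - 1) * n + (r - q + n)" using m1 by (simp add: algebra_simps)
    then have "(m - 1) mod n = r - q + n"
      proof -
      have "(m - 1) mod n = (r - q + n) mod n" using \<open>m - 1 = (q - 1) * n + (r - q + n)\<close> by simp
      also have "... = r - q + n" using False r0 qn by (intro mod_pos_pos_trivial) auto
      finally show ?thesis .
    qed
    then show ?thesis using c False r0 qn q0 d_def by auto
  qed
qed

end
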